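(* For every preference profile $\sigma_N$ of $n$ metrics over $m$ alternatives and every $\epsilon>0$, there exists a nonempty subset $K\subseteq N$ with $|K|\le \left\lceil\frac{1}{\epsilon^2}\log(2m)\right\rceil$ that satisfies $\epsilon$-positional proportionality.
   Context: Let $N=[n]$ be a set of metrics and $A=[m]$ a set of alternatives. Each metric $i\in N$ has a ranking $\sigma_i$ of $A$; $\sigma_i(a)$ is the position of $a$ (1 is best). For $K\subseteq N$, $r\in[m]$, $a\in A$, let $C(K,r,a)=|\{i\in K:\sigma_i(a)\le r\}|$. For $\epsilon\ge0$, a nonempty subset $K\subseteq N$ satisfies $\epsilon$-positional proportionality if for all $a\in A$ and $r\in[m]$, $$\left|\frac{C(N,r,a)}{|N|}-\frac{C(K,r,a)}{|K|}\right|\le\epsilon.$$ Logarithms are natural. *)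

theory Defs
  imports "HOL-Analysis.Analysis"
begin

text \<open>Metrics are N = {0..<n}, alternatives are A = {0..<m}.
  A profile assigns to each metric i a ranking sigma i :: alternative => position,
  a bijection from A onto the positions {1..m} (1 is best).\<close>

definition is_profile :: "nat \<Rightarrow> nat \<Rightarrow> (nat \<Rightarrow> nat \<Rightarrow> nat) \<Rightarrow> bool" where
  "is_profile n m \<sigma> \<longleftrightarrow> (\<forall>i<n. bij_betw (\<sigma> i) {..<m} {1..m})"

definition cnt :: "(nat \<Rightarrow> nat \<Rightarrow> nat) \<Rightarrow> nat set \<Rightarrow> nat \<Rightarrow> nat \<Rightarrow> nat" where
  "cnt \<sigma> K r a = card {i \<in> K. \<sigma> i a \<le> r}"

definition positional_prop ::
  "nat \<Rightarrow> nat \<Rightarrow> (nat \<Rightarrow> nat \<Rightarrow> nat) \<Rightarrow> real \<Rightarrow> nat set \<Rightarrow> bool" where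
  "positional_prop n m \<sigma> \<epsilon> K \<longleftrightarrow>
     K \<noteq> {} \<and> K \<subseteq> {..<n} \<and>
     (\<forall>a<m. \<forall>r\<in>{1..m}.
        \<bar>real (cnt \<sigma> {..<n} r a) / real n - real (cnt \<sigma> K r a) / real (card K)\<bar> \<le> \<epsilon>)"

end

theory Submission imports Defs "HOL-Probability.Hoeffding" begin

definition esym :: "(nat \<Rightarrow> real) \<Rightarrow> nat set \<Rightarrow> nat \<Rightarrow> real" where
  "esym y A k = (\<Sum>T \<in> {T. T \<subseteq> A \<and> card T = k}. \<Prod>i\<in>T. y i)"

lemma esym_0: "finite A \<Longrightarrow> esym y A 0 = 1"
proof -
  assume f: "finite A"
  have "{T. T \<subseteq> A \<and> card T = 0} = {{}}" using f by (auto dest: finite_subset)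
  then show ?thesis by (simp add: esym_def)
qed

lemma esym_big: "finite A \<Longrightarrow> card A < k \<Longrightarrow> esym y A k = 0"
proof -
  assume f: "finite A" and c: "card A < k"
  have "{T. T \<subseteq> A \<and> card T = k} = {}"
  proof safe
    fix T assume "T \<subseteq> A" "k = card T"
    then have "card T \<le> card A" by (intro card_mono[OF f])
    with c \<open>k = card T\<close> show "T \<in> {}" by simp
  qed
  then show ?thesis unfolding esym_def by (metis sum.empty)
qed

lemma esym_nonneg: "(\<And>i. i \<in> A \<Longrightarrow> y i \<ge> 0) \<Longrightarrow> esym y A k \<ge> 0"
  unfolding esym_def by (intro sum_nonneg prod_nonneg) auto

lemma esym_insert:
  assumes f: "finite A" and a: "a \<notin> A"
  shows "esym y (insert a A) (Suc k) = esym y A (Suc k) + y a * esym y A k"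
proof -
  have split: "{T. T \<subseteq> insert a A \<and> card T = Suc k} =
     {T. T \<subseteq> A \<and> card T = Suc k} \<union> insert a ` {T. T \<subseteq> A \<and> card T = k}"
  proof (intro equalityI subsetI)
    fix T assume "T \<in> {T. T \<subseteq> insert a A \<and> card T = Suc k}"
    then have T: "T \<subseteq> insert a A" "card T = Suc k" by auto
    show "T \<in> {T. T \<subseteq> A \<and> card T = Suc k} \<union> insert a ` {T. T \<subseteq> A \<and> card T = k}"
    proof (cases "a \<in> T")
      case True
      have "T - {a} \<subseteq> A" using T by auto
      moreover have "card (T - {a}) = k" using T True by (simp add: card_Diff_singleton)
      ultimately have "T - {a} \<in> {T. T \<subseteq> A \<and> card T = k}" by simp
      then have "insert a (T - {a}) \<in> insert a ` {T. T \<subseteq> A \<and> card T = k}" by (rule imageI)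
      then have "T \<in> insert a ` {T. T \<subseteq> A \<and> card T = k}" using insert_Diff[OF True] by (simp only:)
      then show ?thesis by (rule UnI2)
    next
      case False
      then have "T \<subseteq> A" using T by auto
      then show ?thesis using T by (intro UnI1) simp
    qed
  next
    fix T assume "T \<in> {T. T \<subseteq> A \<and> card T = Suc k} \<union> insert a ` {T. T \<subseteq> A \<and> card T = k}"
    then show "T \<in> {T. T \<subseteq> insert a A \<and> card T = Suc k}"
    proof (cases "T \<in> {T. T \<subseteq> A \<and> card T = Suc k}")
      case True then show ?thesis by (auto dest: subset_insertI2)
    next
      case False
      with \<open>T \<in> _\<close> have "T \<in> insert a ` {T. T \<subseteq> A \<and> card T = k}" by blast
      then obtain U where U: "U \<subseteq> A" "card U = k" "T = insert a U" by blast
      have "finite U" using U(1) f finite_subset by blast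
      moreover have "a \<notin> U" using U(1) a by blast
      ultimately have "card T = Suc k" using U by simp
      moreover have "T \<subseteq> insert a A" using U by blast
      ultimately show ?thesis by simp
    qed
  qed
  have disj: "{T. T \<subseteq> A \<and> card T = Suc k} \<inter> insert a ` {T. T \<subseteq> A \<and> card T = k} = {}"
    using a by auto
  have inj: "inj_on (insert a) {T. T \<subseteq> A \<and> card T = k}"
  proof (rule inj_onI)
    fix U V assume "U \<in> {T. T \<subseteq> A \<and> card T = k}" "V \<in> {T. T \<subseteq> A \<and> card T = k}"
      and e: "insert a U = insert a V"
    then have "a \<notin> U" "a \<notin> V" using a by auto
    then have "U = insert a U - {a}" "V = insert a V - {a}" by simp_all
    then show "U = V" using e by simp
  qed
  have fin1: "finite {T. T \<subseteq> A \<and> card T = Suc k}" using f by simp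
  have fin2: "finite (insert a ` {T. T \<subseteq> A \<and> card T = k})" using f by simp
  have "esym y (insert a A) (Suc k) = esym y A (Suc k) +
      (\<Sum>T \<in> insert a ` {T. T \<subseteq> A \<and> card T = k}. \<Prod>i\<in>T. y i)"
    unfolding esym_def split by (rule sum.union_disjoint[OF fin1 fin2 disj])
  also have "(\<Sum>T \<in> insert a ` {T. T \<subseteq> A \<and> card T = k}. \<Prod>i\<in>T. y i)
      = (\<Sum>T \<in> {T. T \<subseteq> A \<and> card T = k}. \<Prod>i\<in>insert a T. y i)"
    by (rule sum.reindex[OF inj, unfolded comp_def])
  also have "\<dots> = (\<Sum>T \<in> {T. T \<subseteq> A \<and> card T = k}. y a * (\<Prod>i\<in>T. y i))"
  proof (intro sum.cong refl)
    fix T assume "T \<in> {T. T \<subseteq> A \<and> card T = k}"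
    then have "finite T" "a \<notin> T" using a f finite_subset by auto
    then show "(\<Prod>i\<in>insert a T. y i) = y a * (\<Prod>i\<in>T. y i)" by simp
  qed
  also have "\<dots> = y a * esym y A k" by (simp add: esym_def sum_distrib_left)
  finally show ?thesis .
qed


lemma esym_deriv:
  assumes "finite A"
  shows "(\<Sum>i\<in>A. y i * esym y (A - {i}) k) = real (Suc k) * esym y A (Suc k)"
  using assms
proof (induction A arbitrary: k rule: finite_induct)
  case empty
  then show ?case by (simp add: esym_big)
next
  case (insert a F)
  have d: "insert a F - {i} = insert a (F - {i})" if "i \<in> F" for i using that insert.hyps by auto
  have s: "(\<Sum>i\<in>insert a F. y i * esym y (insert a F - {i}) k) =
      y a * esym y F k + (\<Sum>i\<in>F. y i * esym y (insert a (F - {i})) k)"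
    using insert.hyps d by (simp add: sum.insert)
  show ?case
  proof (cases k)
    case 0
    have "(\<Sum>i\<in>F. y i * esym y (insert a (F - {i})) k) = (\<Sum>i\<in>F. y i)"
      using insert.hyps 0 by (intro sum.cong refl) (simp add: esym_0)
    moreover have "(\<Sum>i\<in>F. y i) = esym y F 1"
      using insert.IH[of 0] insert.hyps by (simp add: esym_0)
    ultimately show ?thesis using s 0 insert.hyps
      by (simp add: esym_insert esym_0)
  next
    case (Suc j)
    have "(\<Sum>i\<in>F. y i * esym y (insert a (F - {i})) k) =
        (\<Sum>i\<in>F. y i * esym y (F - {i}) (Suc j)) + y a * (\<Sum>i\<in>F. y i * esym y (F - {i}) j)"
      using insert.hyps Suc
      by (simp add: esym_insert sum.distrib sum_distrib_left algebra_simps)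
    also have "\<dots> = real (Suc (Suc j)) * esym y F (Suc (Suc j)) + y a * (real (Suc j) * esym y F (Suc j))"
      using insert.IH[of "Suc j"] insert.IH[of j] by simp
    finally show ?thesis using s Suc insert.hyps
      by (simp add: esym_insert algebra_simps)
  qed
qed

lemma esym_sum_del:
  assumes "finite A"
  shows "(\<Sum>i\<in>A. esym y (A - {i}) k) = (real (card A) - real k) * esym y A k"
  using assms
proof (induction A arbitrary: k rule: finite_induct)
  case empty
  then show ?case by (cases k) (simp_all add: esym_big)
next
  case (insert a F)
  have d: "insert a F - {i} = insert a (F - {i})" if "i \<in> F" for i using that insert.hyps by auto
  have s: "(\<Sum>i\<in>insert a F. esym y (insert a F - {i}) k) =
      esym y F k + (\<Sum>i\<in>F. esym y (insert a (F - {i})) k)"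
    using insert.hyps d by (simp add: sum.insert)
  show ?case
  proof (cases k)
    case 0
    have "(\<Sum>i\<in>F. esym y (insert a (F - {i})) k) = real (card F)"
      using insert.hyps 0 by (simp add: esym_0)
    then show ?thesis using s 0 insert.hyps by (simp add: esym_0)
  next
    case (Suc j)
    have "(\<Sum>i\<in>F. esym y (insert a (F - {i})) k) =
        (\<Sum>i\<in>F. esym y (F - {i}) (Suc j)) + y a * (\<Sum>i\<in>F. esym y (F - {i}) j)"
      using insert.hyps Suc
      by (simp add: esym_insert sum.distrib sum_distrib_left algebra_simps)
    also have "\<dots> = (real (card F) - real (Suc j)) * esym y F (Suc j) + y a * ((real (card F) - real j) * esym y F j)"
      using insert.IH[of "Suc j"] insert.IH[of j] by simp
    finally show ?thesis using s Suc insert.hyps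
      by (simp add: esym_insert algebra_simps)
  qed
qed


lemma esym_diff:
  assumes f: "finite A" and i: "i \<in> A" and j: "j \<in> A" and ij: "i \<noteq> j"
  shows "esym y (A - {i}) (Suc k) - esym y (A - {j}) (Suc k) = (y j - y i) * esym y (A - {i} - {j}) k"
proof -
  have e1: "A - {i} = insert j (A - {i} - {j})" using j ij by auto
  have e2: "A - {j} = insert i (A - {i} - {j})" using i ij by auto
  have fB: "finite (A - {i} - {j})" using f by simp
  have n1: "j \<notin> A - {i} - {j}" "i \<notin> A - {i} - {j}" by auto
  have "A - {i} - {j} = A - {j} - {i}" by auto
  note h1 = esym_insert[OF fB n1(1), of y k, folded e1]
  note h2 = esym_insert[OF fB n1(2), of y k, folded e2]
  show ?thesis using h1 h2 by (simp add: algebra_simps)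
qed

lemma esym_cheb:
  assumes f: "finite A" and y: "\<And>i. i \<in> A \<Longrightarrow> y i \<ge> 0"
  shows "real (card A) * (real (Suc k) * esym y A (Suc k)) \<le>
         (\<Sum>i\<in>A. y i) * ((real (card A) - real k) * esym y A k)"
proof -
  define g where "g i = esym y (A - {i}) k" for i
  have tm: "(y i - y j) * (g i - g j) \<le> 0" if "i \<in> A" "j \<in> A" for i j
  proof (cases "i = j")
    case True then show ?thesis by simp
  next
    case False
    show ?thesis
    proof (cases k)
      case 0 then show ?thesis using f by (simp add: g_def esym_0)
    next
      case (Suc k')
      have eq: "g i - g j = (y j - y i) * esym y (A - {i} - {j}) k'"
        unfolding g_def Suc using esym_diff[OF f that False] .
      have "esym y (A - {i} - {j}) k' \<ge> 0" using y by (intro esym_nonneg) auto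
      have "(y i - y j) * (g i - g j) = (y i - y j) * ((y j - y i) * esym y (A - {i} - {j}) k')"
        by (simp only: eq)
      also have "\<dots> = - ((y i - y j)^2 * esym y (A - {i} - {j}) k')"
        by (simp add: power2_eq_square algebra_simps)
      also have "\<dots> \<le> 0" using \<open>esym y (A - {i} - {j}) k' \<ge> 0\<close> by simp
      finally show ?thesis .
    qed
  qed
  have D: "(\<Sum>i\<in>A. \<Sum>j\<in>A. (y i - y j) * (g i - g j)) \<le> 0"
    using tm by (intro sum_nonpos) auto
  have "(\<Sum>i\<in>A. \<Sum>j\<in>A. (y i - y j) * (g i - g j)) =
     (\<Sum>i\<in>A. \<Sum>j\<in>A. y i * g i + y j * g j - y i * g j - y j * g i)"
    by (simp add: algebra_simps)
  also have "\<dots> = (\<Sum>i\<in>A. \<Sum>j\<in>A. y i * g i) + (\<Sum>i\<in>A. \<Sum>j\<in>A. y j * g j)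
      - (\<Sum>i\<in>A. \<Sum>j\<in>A. y i * g j) - (\<Sum>i\<in>A. \<Sum>j\<in>A. y j * g i)"
    by (simp only: sum_subtractf sum.distrib)
  also have "(\<Sum>i\<in>A. \<Sum>j\<in>A. y i * g i) = real (card A) * (\<Sum>i\<in>A. y i * g i)"
    by (simp add: sum_distrib_left mult.commute)
  also have "(\<Sum>i\<in>A. \<Sum>j\<in>A. y j * g j) = real (card A) * (\<Sum>i\<in>A. y i * g i)"
    by simp
  also have "(\<Sum>i\<in>A. \<Sum>j\<in>A. y i * g j) = (\<Sum>i\<in>A. y i) * (\<Sum>i\<in>A. g i)"
    by (simp add: sum_product)
  also have "(\<Sum>i\<in>A. \<Sum>j\<in>A. y j * g i) = (\<Sum>i\<in>A. y i) * (\<Sum>i\<in>A. g i)"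
    by (simp add: sum_product mult.commute)
  finally have "real (card A) * (\<Sum>i\<in>A. y i * g i) \<le> (\<Sum>i\<in>A. y i) * (\<Sum>i\<in>A. g i)"
    using D by linarith
  then show ?thesis
    unfolding g_def esym_deriv[OF f] esym_sum_del[OF f] .
qed


lemma binom_step_real:
  assumes "k < n"
  shows "real (Suc k) * real (n choose Suc k) = (real n - real k) * real (n choose k)"
proof -
  obtain n' where n: "n = Suc n'" using assms by (cases n) auto
  have "Suc k * (n choose Suc k) = n * (n' choose k)" using Suc_times_binomial[of k n'] n by simp
  also have "\<dots> = (n - k) * (n choose k)" using binomial_absorb_comp[of n k] n by simp
  finally have "real (Suc k * (n choose Suc k)) = real ((n - k) * (n choose k))" by simp
  then show ?thesis using assms by (simp add: of_nat_diff algebra_simps)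
qed

lemma maclaurin:
  assumes f: "finite A" and n: "card A > 0" and y: "\<And>i. i \<in> A \<Longrightarrow> y i \<ge> 0"
  shows "esym y A k \<le> real (card A choose k) * ((\<Sum>i\<in>A. y i) / real (card A)) ^ k"
proof (induction k)
  case 0 then show ?case using f by (simp add: esym_0)
next
  case (Suc k)
  define S where "S = (\<Sum>i\<in>A. y i)"
  define N where "N = real (card A)"
  have S0: "S \<ge> 0" unfolding S_def using y by (intro sum_nonneg) auto
  have N0: "N > 0" unfolding N_def using n by simp
  show ?case
  proof (cases "k < card A")
    case False
    then have "esym y A (Suc k) = 0" using f by (intro esym_big) auto
    then show ?thesis using S0 N0 unfolding S_def[symmetric] N_def[symmetric] by simp
  next
    case True
    have c: "N * (real (Suc k) * esym y A (Suc k)) \<le> S * ((N - real k) * esym y A k)"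
      using esym_cheb[OF f y, where k=k] unfolding S_def N_def by simp
    have Nk: "N - real k > 0" using True N_def by simp
    have "S * ((N - real k) * esym y A k) \<le> S * ((N - real k) * (real (card A choose k) * (S / N) ^ k))"
      using Suc.IH S0 Nk unfolding S_def[symmetric] N_def[symmetric]
      by (intro mult_left_mono) auto
    also have "\<dots> = S * (S / N) ^ k * ((N - real k) * real (card A choose k))" by simp
    also have "\<dots> = S * (S / N) ^ k * (real (Suc k) * real (card A choose Suc k))"
      using binom_step_real[OF True] unfolding N_def by simp
    finally have "N * (real (Suc k) * esym y A (Suc k)) \<le> S * (S / N) ^ k * (real (Suc k) * real (card A choose Suc k))"
      using c by linarith
    then have "real (Suc k) * (N * esym y A (Suc k)) \<le> real (Suc k) * (S * (S / N) ^ k * real (card A choose Suc k))"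
      by (simp only: mult_ac)
    then have "N * esym y A (Suc k) \<le> S * (S / N) ^ k * real (card A choose Suc k)"
      by (rule mult_left_le_imp_le) simp
    then have "esym y A (Suc k) \<le> S * (S / N) ^ k * real (card A choose Suc k) / N"
      using N0 by (simp add: field_simps)
    also have "\<dots> = real (card A choose Suc k) * (S / N) ^ Suc k"
      by (simp add: field_simps)
    finally show ?thesis unfolding S_def N_def .
  qed
qed


lemma bern_mgf:
  fixes p h :: real
  assumes "0 \<le> p" "0 \<le> h"
  shows "1 + p * (exp h - 1) \<le> exp (h * p + h^2 / 8)"
proof -
  have pos: "1 + p * (exp h - 1) > 0"
    using assms by (intro add_pos_nonneg mult_nonneg_nonneg) auto
  have "-h * p + ln (1 + p * (exp h - 1)) \<le> h^2 / 8"
    using Hoeffdings_lemma_aux[of h p] assms by simp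
  then have "ln (1 + p * (exp h - 1)) \<le> h * p + h^2 / 8" by simp
  then have "exp (ln (1 + p * (exp h - 1))) \<le> exp (h * p + h^2 / 8)" by simp
  then show ?thesis using pos by simp
qed

lemma tail:
  fixes x :: "nat \<Rightarrow> real" and t :: real
  assumes f: "finite A" and n: "card A > 0" and x01: "\<And>i. i \<in> A \<Longrightarrow> x i = 0 \<or> x i = 1"
    and t: "t > 0"
  shows "real (card {T. T \<subseteq> A \<and> card T = k \<and>
            real k * t < (\<Sum>i\<in>T. x i) - real k * ((\<Sum>i\<in>A. x i) / real (card A))})
         \<le> real (card A choose k) * exp (- 2 * real k * t^2)"
proof -
  define N where "N = real (card A)"
  define p where "p = (\<Sum>i\<in>A. x i) / N"
  define l where "l = 4 * t"
  define y where "y i = exp (l * x i)" for i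
  define TT where "TT = {T. T \<subseteq> A \<and> card T = k}"
  define B where "B = {T. T \<subseteq> A \<and> card T = k \<and> real k * t < (\<Sum>i\<in>T. x i) - real k * p}"
  have N0: "N > 0" using n N_def by simp
  have l0: "l > 0" using t l_def by simp
  have x0: "x i \<ge> 0" if "i \<in> A" for i using x01[OF that] by auto
  have p0: "p \<ge> 0" unfolding p_def using x0 N0 by (intro divide_nonneg_pos sum_nonneg) auto
  have finTT: "finite TT" unfolding TT_def using f by simp
  have BT: "B \<subseteq> TT" unfolding B_def TT_def by auto
  have prodT: "(\<Prod>i\<in>T. y i) = exp (l * (\<Sum>i\<in>T. x i))" if "T \<in> TT" for T
  proof -
    have "finite T" using that f finite_subset unfolding TT_def by auto
    then show ?thesis unfolding y_def by (simp add: exp_sum sum_distrib_left)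
  qed
  have sumy: "(\<Sum>i\<in>A. y i) = N * (1 + p * (exp l - 1))"
  proof -
    have "(\<Sum>i\<in>A. y i) = (\<Sum>i\<in>A. 1 + x i * (exp l - 1))"
      unfolding y_def
    proof (intro sum.cong refl)
      fix i assume "i \<in> A"
      then show "exp (l * x i) = 1 + x i * (exp l - 1)" using x01[of i] by auto
    qed
    also have "\<dots> = N + (\<Sum>i\<in>A. x i) * (exp l - 1)"
      by (simp add: sum.distrib sum_distrib_right N_def)
    also have "\<dots> = N * (1 + p * (exp l - 1))"
      using N0 by (simp add: p_def field_simps)
    finally show ?thesis .
  qed
  have "(\<Sum>T\<in>TT. exp (l * (\<Sum>i\<in>T. x i))) = esym y A k"
    unfolding esym_def TT_def[symmetric] using prodT by (intro sum.cong refl) auto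
  also have "\<dots> \<le> real (card A choose k) * ((\<Sum>i\<in>A. y i) / N) ^ k"
    unfolding N_def using maclaurin[OF f n, of y k] unfolding y_def by simp
  also have "((\<Sum>i\<in>A. y i) / N) = 1 + p * (exp l - 1)" using sumy N0 by simp
  also have "(1 + p * (exp l - 1)) ^ k \<le> exp (l * p + l^2 / 8) ^ k"
    using bern_mgf[of p l] p0 l0 by (intro power_mono) (auto intro: add_nonneg_nonneg mult_nonneg_nonneg)
  also have "exp (l * p + l^2 / 8) ^ k = exp (real k * (l * p + l^2 / 8))"
    by (simp add: exp_of_nat_mult)
  finally have up: "(\<Sum>T\<in>TT. exp (l * (\<Sum>i\<in>T. x i))) \<le>
      real (card A choose k) * exp (real k * (l * p + l^2 / 8))"
    by (simp add: mult_left_mono)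
  have "real (card B) * exp (l * (real k * p + real k * t)) = (\<Sum>T\<in>B. exp (l * (real k * p + real k * t)))"
    by simp
  also have "\<dots> \<le> (\<Sum>T\<in>B. exp (l * (\<Sum>i\<in>T. x i)))"
    using l0 unfolding B_def by (intro sum_mono) auto
  also have "\<dots> \<le> (\<Sum>T\<in>TT. exp (l * (\<Sum>i\<in>T. x i)))"
    using BT finTT by (intro sum_mono2) auto
  also note up
  finally have "real (card B) * exp (l * (real k * p + real k * t))
      \<le> real (card A choose k) * exp (real k * (l * p + l^2 / 8))" .
  then have "real (card B) \<le> real (card A choose k) * exp (real k * (l * p + l^2 / 8)) / exp (l * (real k * p + real k * t))"
    by (simp add: field_simps)
  also have "\<dots> = real (card A choose k) * exp (real k * (l * p + l^2 / 8) - l * (real k * p + real k * t))"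
    by (simp add: exp_diff)
  also have "real k * (l * p + l^2 / 8) - l * (real k * p + real k * t) = - 2 * real k * t^2"
    unfolding l_def by (simp add: power2_eq_square algebra_simps)
  finally show ?thesis unfolding B_def p_def N_def .
qed


lemma cnt_sum:
  assumes "finite K"
  shows "real (cnt \<sigma> K r a) = (\<Sum>i\<in>K. of_bool (\<sigma> i a \<le> r))"
proof -
  have "K \<inter> {i. \<sigma> i a \<le> r} = {i \<in> K. \<sigma> i a \<le> r}" by auto
  then show ?thesis using assms by (simp add: cnt_def)
qed

lemma exp_aux: "m \<ge> 1 \<Longrightarrow> exp (- 2 * ln (2 * real m)) = 1 / (2 * real m)^2"
proof -
      assume "m \<ge> 1"
      then have y0: "2 * real m > 0" by simp
      have ex: "exp (- 2 * L) = inverse (exp L * exp L)" for L :: real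
        by (simp add: exp_minus[symmetric] exp_add[symmetric])
      have "exp (- 2 * ln (2 * real m)) = inverse ((2 * real m) * (2 * real m))"
        by (simp only: ex exp_ln[OF y0])
      then show ?thesis by (simp only: power2_eq_square divide_inverse mult_1)
qed

theorem theorem3:
  fixes n m :: nat and \<sigma> :: "nat \<Rightarrow> nat \<Rightarrow> nat" and \<epsilon> :: real
  assumes "n \<ge> 1" and "m \<ge> 1"
    and "is_profile n m \<sigma>"
    and "\<epsilon> > 0"
  shows "\<exists>K. K \<subseteq> {..<n} \<and> K \<noteq> {} \<and>
           real (card K) \<le> real_of_int \<lceil>(1 / \<epsilon>^2) * ln (2 * real m)\<rceil> \<and>
           positional_prop n m \<sigma> \<epsilon> K"
proof -
  define c where "c = (1 / \<epsilon>^2) * ln (2 * real m)"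
  define k where "k = nat \<lceil>c\<rceil>"
  have lnpos: "ln (2 * real m) > 0" using assms(2) by simp
  have c0: "c > 0" unfolding c_def using lnpos assms(4) by simp
  have kc: "real k = real_of_int \<lceil>c\<rceil>" unfolding k_def using c0 by simp
  have kc2: "real k \<ge> c" using kc by simp
  have k1: "k \<ge> 1" using kc2 c0 by simp
  show ?thesis
  proof (cases "n \<le> k")
    case True
    define K where "K = {..<n}"
    have "0 \<in> K" using assms(1) unfolding K_def by simp
    then have "K \<noteq> {}" by auto
    moreover have "real (card K) \<le> real_of_int \<lceil>c\<rceil>" using True kc unfolding K_def by simp
    moreover have "positional_prop n m \<sigma> \<epsilon> K"
      unfolding positional_prop_def K_def using assms(1,4) by (auto simp: lessThan_empty_iff)
    ultimately show ?thesis unfolding K_def c_def by auto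
  next
    case False
    then have kn: "k < n" by simp
    define NN where "NN = {..<n}"
    have fN: "finite NN" and cN: "card NN = n" and cN0: "card NN > 0"
      unfolding NN_def using assms(1) by auto
    define TT where "TT = {T. T \<subseteq> NN \<and> card T = k}"
    define C where "C = real (n choose k)"
    have cardTT: "real (card TT) = C" unfolding TT_def C_def using n_subsets[OF fN] cN by simp
    have C0: "C > 0" unfolding C_def using kn by simp
    define e where "e = exp (- 2 * real k * \<epsilon>^2)"
    have "real k * \<epsilon>^2 \<ge> ln (2 * real m)"
    proof -
      have "real k * \<epsilon>^2 \<ge> c * \<epsilon>^2" using kc2 by (intro mult_right_mono) auto
      also have "c * \<epsilon>^2 = ln (2 * real m)" unfolding c_def using assms(4) by simp
      finally show ?thesis .
    qed
    then have "- 2 * real k * \<epsilon>^2 \<le> - 2 * ln (2 * real m)" by simp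
    then have "e \<le> exp (- 2 * ln (2 * real m))" unfolding e_def by simp
    also have "exp (- 2 * ln (2 * real m)) = 1 / (2 * real m)^2"
      using exp_aux[OF assms(2)] .
    finally have e_le: "e \<le> 1 / (2 * real m)^2" .
    define x where "x a r i = (of_bool (\<sigma> i a \<le> r) :: real)" for a r i
    define Bad where "Bad a r = {T. T \<subseteq> NN \<and> card T = k \<and>
        \<not> \<bar>real (cnt \<sigma> NN r a) / real n - real (cnt \<sigma> T r a) / real (card T)\<bar> \<le> \<epsilon>}" for a r
    have bad_card: "real (card (Bad a r)) \<le> 2 * C * e" for a r
    proof -
      define B1 where "B1 = {T. T \<subseteq> NN \<and> card T = k \<and>
            real k * \<epsilon> < (\<Sum>i\<in>T. x a r i) - real k * ((\<Sum>i\<in>NN. x a r i) / real (card NN))}"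
      define B2 where "B2 = {T. T \<subseteq> NN \<and> card T = k \<and>
            real k * \<epsilon> < (\<Sum>i\<in>T. 1 - x a r i) - real k * ((\<Sum>i\<in>NN. 1 - x a r i) / real (card NN))}"
      have x01: "x a r i = 0 \<or> x a r i = 1" for i unfolding x_def by auto
      have x01': "1 - x a r i = 0 \<or> 1 - x a r i = 1" for i unfolding x_def by auto
      have h1: "real (card B1) \<le> C * e"
        unfolding B1_def C_def e_def using tail[OF fN cN0 x01 assms(4), of k] cN by simp
      have h2: "real (card B2) \<le> C * e"
        unfolding B2_def C_def e_def using tail[OF fN cN0 x01' assms(4), of k] cN by simp
      have sub: "Bad a r \<subseteq> B1 \<union> B2"
      proof
        fix T assume T: "T \<in> Bad a r"
        then have TN: "T \<subseteq> NN" and Tk: "card T = k" unfolding Bad_def by auto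
        have fT: "finite T" using TN fN finite_subset by auto
        define s where "s = (\<Sum>i\<in>T. x a r i)"
        define p where "p = (\<Sum>i\<in>NN. x a r i) / real n"
        have cT: "real (cnt \<sigma> T r a) = s" unfolding s_def x_def using cnt_sum[OF fT] .
        have cNN: "real (cnt \<sigma> NN r a) / real n = p" unfolding p_def x_def using cnt_sum[OF fN] by simp
        have kpos: "real k > 0" using k1 by simp
        have nb: "\<not> \<bar>p - s / real k\<bar> \<le> \<epsilon>" using T cT cNN Tk unfolding Bad_def by simp
        have s2: "(\<Sum>i\<in>T. 1 - x a r i) = real k - s" unfolding s_def using Tk
          by (simp add: sum_subtractf)
        have p2: "(\<Sum>i\<in>NN. 1 - x a r i) / real (card NN) = 1 - p" unfolding p_def using cN assms(1)
          by (simp add: sum_subtractf field_simps)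
        show "T \<in> B1 \<union> B2"
        proof (cases "s / real k - p > \<epsilon>")
          case True
          then have "real k * \<epsilon> < s - real k * p" using kpos by (simp add: field_simps)
          then show ?thesis unfolding B1_def using TN Tk cN by (simp add: s_def p_def)
        next
          case False
          then have "p - s / real k > \<epsilon>" using nb by auto
          then have "real k * \<epsilon> < (real k - s) - real k * (1 - p)" using kpos by (simp add: field_simps)
          then show ?thesis unfolding B2_def using TN Tk s2 p2 by simp
        qed
      qed
      have "finite B1" "finite B2" unfolding B1_def B2_def using fN by auto
      then have "card (Bad a r) \<le> card B1 + card B2"
        using card_mono[OF _ sub] card_Un_le[of B1 B2] by auto
      then have "real (card (Bad a r)) \<le> real (card B1) + real (card B2)" by linarith
      then show ?thesis using h1 h2 by simp
    qed
    define U where "U = (\<Union>a\<in>{..<m}. \<Union>r\<in>{1..m}. Bad a r)"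
    have "card U \<le> (\<Sum>a\<in>{..<m}. card (\<Union>r\<in>{1..m}. Bad a r))"
      unfolding U_def by (rule card_UN_le) simp
    also have "\<dots> \<le> (\<Sum>a\<in>{..<m}. \<Sum>r\<in>{1..m}. card (Bad a r))"
      by (intro sum_mono card_UN_le) simp
    finally have "real (card U) \<le> real (\<Sum>a\<in>{..<m}. \<Sum>r\<in>{1..m}. card (Bad a r))"
      by (simp only: of_nat_le_iff)
    also have "\<dots> = (\<Sum>a\<in>{..<m}. \<Sum>r\<in>{1..m}. real (card (Bad a r)))"
      by simp
    also have "\<dots> \<le> (\<Sum>a\<in>{..<m}. \<Sum>r\<in>{1..m}. 2 * C * e)"
      by (intro sum_mono bad_card)
    also have "\<dots> = real m * real m * (2 * C * e)" by simp
    also have "\<dots> \<le> real m * real m * (2 * C * (1 / (2 * real m)^2))"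
      using e_le C0 by (intro mult_left_mono) auto
    also have "\<dots> = C / 2" using assms(2) by (simp add: power2_eq_square field_simps)
    also have "\<dots> < C" using C0 by simp
    finally have "card U < card TT" using cardTT by simp
    have "U \<subseteq> Pow NN" unfolding U_def Bad_def by auto
    then have fU: "finite U" using fN finite_subset by blast
    have "\<not> TT \<subseteq> U"
    proof
      assume "TT \<subseteq> U"
      then have "card TT \<le> card U" by (rule card_mono[OF fU])
      with \<open>card U < card TT\<close> show False by simp
    qed
    then obtain T where T: "T \<in> TT" "T \<notin> U" by blast
    have TN: "T \<subseteq> {..<n}" and Tk: "card T = k" using T(1) unfolding TT_def NN_def by auto
    have Tne: "T \<noteq> {}" using Tk k1 by auto
    have "positional_prop n m \<sigma> \<epsilon> T"
      unfolding positional_prop_def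
    proof (intro conjI allI impI ballI Tne TN)
      fix a r assume a: "a < m" and r: "r \<in> {1..m}"
      have "T \<notin> Bad a r" using T(2) a r unfolding U_def by auto
      then show "\<bar>real (cnt \<sigma> {..<n} r a) / real n - real (cnt \<sigma> T r a) / real (card T)\<bar> \<le> \<epsilon>"
        using TN Tk unfolding Bad_def NN_def by auto
    qed
    moreover have "real (card T) \<le> real_of_int \<lceil>c\<rceil>" using Tk kc by simp
    ultimately show ?thesis using TN Tne unfolding c_def by auto
  qed
qed

end
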